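(* Let $d\ge 1$ and $n\ge 2$ be integers, $\kappa_d$ the volume of the $d$-dimensional unit ball, $V>0$, $-d/2<\tau_1<\dots<\tau_n$ reals, $a_i=\tau_i+d$ for $i\in[n]$, $b=\sum_{k=1}^n\prod_{l\in[n]\setminus\{k\}}a_l^2$ and $P=\prod_{k=1}^n a_k^2$. Let $\Sigma_n$ have entries $(\Sigma_n)_{ij}=\frac{Vd^2\kappa_d^2}{a_ia_j}$, let $\lambda_1=0$, $\lambda_2=Vd^2\kappa_d^2\sum_{i=1}^n a_i^{-2}$, and let $D=\operatorname{diag}(\lambda_1,\dots,\lambda_1,\lambda_2)\in\mathbb{R}^{n\times n}$. Let $S\in\mathbb{R}^{n\times n}$ have columns $v_1,\dots,v_n$, where $v_k=\frac{a_1}{a_{k+1}}e_1-e_{k+1}$ for $k=1,\dots,n-1$ ($e_i$ the standard basis vectors) and $v_n=(a_n/a_1,\dots,a_n/a_{n-1},1)^t$. Then $S$ is invertible, $\Sigma_n$ is similar to $D$ with $D=S^{-1}\Sigma_nS$, and $S^{-1}=(\tilde s_{ij})$ has entries $$\tilde s_{ij}=\begin{cases}\dfrac{P}{a_ja_nb} & \text{if } i=n,\\[2mm] -\dfrac{\sum_{k\in[n]\setminus\{i+1\}}a_{i+1}^2\prod_{l\in[n]\setminus\{k,i+1\}}a_l^2}{b} & \text{if } i<n,\ j=i+1,\\[2mm] \dfrac{P}{a_{i+1}a_jb} & \text{otherwise.}\end{cases}$$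
   Context: $\Sigma_n$ is the asymptotic covariance matrix of normalized length power functionals of a random geometric graph in the supercritical regime; $V$ is the volume of the window $W$. $[n]=\{1,\dots,n\}$. *)

theory Defs
  imports "HOL-Analysis.Analysis" "Jordan_Normal_Form.Matrix"
begin

text \<open>Matrices are Jordan_Normal_Form matrices with 0-based indices; the paper's
  1-based index i corresponds to row/column index i-1. The sequences a, tau are
  indexed 1-based as functions on nat.\<close>

definition Sigma_mat :: "nat \<Rightarrow> real \<Rightarrow> nat \<Rightarrow> (nat \<Rightarrow> real) \<Rightarrow> real mat" where
  "Sigma_mat n V d a = mat n n (\<lambda>(i,j).
     V * (real d)^2 * (unit_ball_vol (real d))^2 / (a (i+1) * a (j+1)))"

definition D_mat :: "nat \<Rightarrow> real \<Rightarrow> real \<Rightarrow> real mat" where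
  "D_mat n l1 l2 = mat n n (\<lambda>(i,j). if i = j then (if i = n - 1 then l2 else l1) else 0)"

text \<open>S with columns v_1..v_n: v_k = (a_1/a_{k+1}) e_1 - e_{k+1} for k<n,
  v_n = (a_n/a_1, ..., a_n/a_{n-1}, 1)^t. Entry (i,k) (1-based) is the i-th
  component of v_k.\<close>
definition S_mat :: "nat \<Rightarrow> (nat \<Rightarrow> real) \<Rightarrow> real mat" where
  "S_mat n a = mat n n (\<lambda>(i0,k0). let i = i0 + 1; k = k0 + 1 in
     if k < n then (if i = 1 then a 1 / a (k+1) else 0) - (if i = k + 1 then 1 else 0)
     else (if i < n then a n / a i else 1))"

definition S_inv_mat :: "nat \<Rightarrow> (nat \<Rightarrow> real) \<Rightarrow> real \<Rightarrow> real \<Rightarrow> real mat" where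
  "S_inv_mat n a b P = mat n n (\<lambda>(i0,j0). let i = i0 + 1; j = j0 + 1 in
     if i = n then P / (a j * a n * b)
     else if j = i + 1 then
       - (\<Sum>k\<in>{1..n} - {i+1}. (a (i+1))^2 * (\<Prod>l\<in>{1..n} - {k, i+1}. (a l)^2)) / b
     else P / (a (i+1) * a j * b))"

end

theory Submission
  imports Defs "Jordan_Normal_Form.Determinant"
begin

lemma S_entry_lt:
  assumes "m < n" "c + 1 < n"
  shows "S_mat n a $$ (m,c) = (if m = 0 then a 1 / a (c+2) else 0) - (if m = c+1 then 1 else 0)"
  using assms by (auto simp: S_mat_def Let_def)

lemma S_entry_last:
  assumes "m < n" "a n \<noteq> 0"
  shows "S_mat n a $$ (m,n-1) = a n / a (m+1)"
proof (cases "m + 1 < n")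
  case True then show ?thesis using assms by (auto simp: S_mat_def Let_def)
next
  case False then have "m + 1 = n" using assms by simp
  then show ?thesis using assms by (auto simp: S_mat_def Let_def)
qed

lemma S_col_lt:
  fixes f :: "nat \<Rightarrow> real"
  assumes "c + 1 < n"
  shows "(\<Sum>m<n. f m * S_mat n a $$ (m,c)) = f 0 * (a 1 / a (c+2)) - f (c+1)"
proof -
  have "(\<Sum>m<n. f m * S_mat n a $$ (m,c)) =
        (\<Sum>m<n. (if m = 0 then f m * (a 1 / a (c+2)) else 0) - (if m = c+1 then f m else 0))"
  proof (rule sum.cong)
    fix m assume "m \<in> {..<n}"
    then have "S_mat n a $$ (m,c) = (if m = 0 then a 1 / a (c+2) else 0) - (if m = c+1 then 1 else 0)"
      using S_entry_lt assms by simp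
    then show "f m * S_mat n a $$ (m,c) = (if m = 0 then f m * (a 1 / a (c+2)) else 0) - (if m = c+1 then f m else 0)"
      by (simp add: right_diff_distrib)
  qed simp
  also have "\<dots> = f 0 * (a 1 / a (c+2)) - f (c+1)"
    using assms by (simp add: sum_subtractf)
  finally show ?thesis .
qed

lemma S_col_last:
  fixes f :: "nat \<Rightarrow> real"
  assumes "a n \<noteq> 0"
  shows "(\<Sum>m<n. f m * S_mat n a $$ (m,n-1)) = (\<Sum>m<n. f m * (a n / a (m+1)))"
proof (rule sum.cong)
  fix m assume "m \<in> {..<n}"
  then have "S_mat n a $$ (m,n-1) = a n / a (m+1)" using S_entry_last assms by simp
  then show "f m * S_mat n a $$ (m,n-1) = f m * (a n / a (m+1))" by simp
qed simp

lemma mult_entry: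
  fixes A B :: "real mat"
  assumes "A \<in> carrier_mat n n" "B \<in> carrier_mat n n" "r < n" "c < n"
  shows "(A * B) $$ (r,c) = (\<Sum>m<n. A $$ (r,m) * B $$ (m,c))"
  using assms by (simp add: scalar_prod_def atLeast0LessThan)

lemma sum_shift1: "(\<Sum>i\<in>{1..n}. g i) = (\<Sum>m<n. g (Suc m))"
  by (induction n) (auto simp: atLeastAtMostSuc_conv add.commute)

lemma prod_remove2:
  fixes f :: "nat \<Rightarrow> real"
  assumes "finite A" "k \<in> A" "j \<in> A" "k \<noteq> j"
  shows "prod f A = f k * f j * prod f (A - {k, j})"
proof -
  have "prod f A = f k * prod f (A - {k})" using prod.remove[OF assms(1,2)] by simp
  also have "prod f (A - {k}) = f j * prod f (A - {k} - {j})"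
    using assms by (intro prod.remove) auto
  also have "A - {k} - {j} = A - {k, j}" by auto
  finally show ?thesis by simp
qed

theorem corollary5p4:
  fixes d n :: nat and V :: real and \<tau> :: "nat \<Rightarrow> real"
  assumes "d \<ge> 1" and "n \<ge> 2" and "V > 0"
    and "- real d / 2 < \<tau> 1"
    and "\<And>i. 1 \<le> i \<Longrightarrow> i < n \<Longrightarrow> \<tau> i < \<tau> (i + 1)"
  defines "a \<equiv> (\<lambda>i. \<tau> i + real d)"
  defines "b \<equiv> (\<Sum>k\<in>{1..n}. \<Prod>l\<in>{1..n} - {k}. (a l)^2)"
  defines "P \<equiv> (\<Prod>k\<in>{1..n}. (a k)^2)"
  defines "lam1 \<equiv> (0::real)"
  defines "lam2 \<equiv> V * (real d)^2 * (unit_ball_vol (real d))^2 * (\<Sum>i\<in>{1..n}. 1 / (a i)^2)"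
  defines "\<Sigma> \<equiv> Sigma_mat n V d a"
  defines "D \<equiv> D_mat n lam1 lam2"
  defines "S \<equiv> S_mat n a"
  defines "Sinv \<equiv> S_inv_mat n a b P"
  shows "invertible_mat S \<and> inverts_mat S Sinv \<and> inverts_mat Sinv S
         \<and> similar_mat \<Sigma> D \<and> D = Sinv * \<Sigma> * S"
proof -
  define c0 where "c0 = V * (real d)^2 * (unit_ball_vol (real d))^2"
  define W where "W = (\<Sum>i\<in>{1..n}. 1 / (a i)^2)"
  have mono: "\<tau> 1 \<le> \<tau> i" if "1 \<le> i" "i \<le> n" for i
    using that
  proof (induction i)
    case 0 then show ?case by simp
  next
    case (Suc i)
    show ?case
    proof (cases "i = 0")
      case True then show ?thesis by simp
    next
      case False
      then have "\<tau> 1 \<le> \<tau> i" using Suc by simp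
      moreover have "\<tau> i < \<tau> (i+1)" using assms(5)[of i] False Suc.prems by simp
      ultimately show ?thesis by simp
    qed
  qed
  have apos: "a i > 0" if "1 \<le> i" "i \<le> n" for i
    using mono[OF that] assms(4) unfolding a_def by linarith
  have anz: "a i \<noteq> 0" if "1 \<le> i" "i \<le> n" for i using apos[OF that] by simp
  have W_shift: "W = (\<Sum>m<n. 1 / (a (m+1))^2)" unfolding W_def using sum_shift1[of "\<lambda>i. 1 / (a i)^2" n] by simp
  have Wpos: "W > 0" unfolding W_def
    using assms(2) anz by (intro sum_pos) auto
  have Pnz: "P \<noteq> 0" unfolding P_def using anz by (simp add: prod_zero_iff)
  have b_eq: "b = P * W"
  proof -
    have "b = (\<Sum>k\<in>{1..n}. P / (a k)^2)" unfolding b_def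
    proof (rule sum.cong)
      fix k assume k: "k \<in> {1..n}"
      have "P = (a k)^2 * (\<Prod>l\<in>{1..n} - {k}. (a l)^2)" unfolding P_def
        using k prod.remove[of "{1..n}" k "\<lambda>l. (a l)^2"] by simp
      then show "(\<Prod>l\<in>{1..n} - {k}. (a l)^2) = P / (a k)^2" using anz k by simp
    qed simp
    also have "\<dots> = P * W" unfolding W_def by (simp add: sum_distrib_left)
    finally show ?thesis .
  qed
  define g where "g r = (if r + 1 < n then r + 2 else n)" for r
  have g_rng: "1 \<le> g r \<and> g r \<le> n" if "r < n" for r using that assms(2) by (simp add: g_def)
  have Sinv_entry: "Sinv $$ (r,c) = 1 / (W * a (g r) * a (c+1)) - (if r + 1 < n \<and> c = r + 1 then 1 else 0)"
    if rc: "r < n" "c < n" for r c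
  proof (cases "r + 1 < n")
    case False
    then have "r + 1 = n" using rc by simp
    then show ?thesis unfolding Sinv_def S_inv_mat_def using rc Pnz Wpos
      by (simp add: Let_def g_def b_eq field_simps)
  next
    case True
    show ?thesis
    proof (cases "c = r + 1")
      case False
      then show ?thesis unfolding Sinv_def S_inv_mat_def using rc Pnz Wpos True
        by (simp add: Let_def g_def b_eq field_simps)
    next
      case cT: True
      let ?A = "{1..n::nat}"
      have sumeq: "(\<Sum>k\<in>?A - {r+2}. (a (r+2))^2 * (\<Prod>l\<in>?A - {k, r+2}. (a l)^2))
            = (\<Sum>k\<in>?A - {r+2}. P / (a k)^2)"
      proof (rule sum.cong)
        fix k assume k: "k \<in> ?A - {r+2}"
        have "P = (a k)^2 * (a (r+2))^2 * (\<Prod>l\<in>?A - {k, r+2}. (a l)^2)"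
          unfolding P_def using k True by (intro prod_remove2) auto
        then show "(a (r+2))^2 * (\<Prod>l\<in>?A - {k, r+2}. (a l)^2) = P / (a k)^2"
          using anz k by (simp add: field_simps)
      qed simp
      also have "\<dots> = P * W - P / (a (r+2))^2"
      proof -
        have "(\<Sum>k\<in>?A. P / (a k)^2) = P / (a (r+2))^2 + (\<Sum>k\<in>?A - {r+2}. P / (a k)^2)"
          using True by (intro sum.remove) auto
        moreover have "(\<Sum>k\<in>?A. P / (a k)^2) = P * W" unfolding W_def by (simp add: sum_distrib_left)
        ultimately show ?thesis by simp
      qed
      finally have sumeq': "(\<Sum>k\<in>?A - {r+2}. (a (r+2))^2 * (\<Prod>l\<in>?A - {k, r+2}. (a l)^2))
            = P * W - P / (a (r+2))^2" .
      have ar: "a (r+2) \<noteq> 0" using anz True by simp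
      have ent: "Sinv $$ (r,c) = - (\<Sum>k\<in>?A - {r+2}. (a (r+2))^2 * (\<Prod>l\<in>?A - {k, r+2}. (a l)^2)) / b"
        unfolding Sinv_def S_inv_mat_def using rc True cT by (simp add: Let_def numeral_2_eq_2)
      show ?thesis unfolding ent sumeq' using rc True cT Pnz Wpos ar
        by (simp add: g_def b_eq field_simps power2_eq_square)
    qed
  qed
  have carr: "S \<in> carrier_mat n n" "Sinv \<in> carrier_mat n n" "\<Sigma> \<in> carrier_mat n n" "D \<in> carrier_mat n n"
    by (simp_all add: S_def S_mat_def Sinv_def S_inv_mat_def \<Sigma>_def Sigma_mat_def D_def D_mat_def)
  have an: "a n \<noteq> 0" using anz assms(2) by simp
  have a1: "a 1 \<noteq> 0" using anz assms(2) by simp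
  have inv1: "Sinv * S = 1\<^sub>m n"
  proof (rule eq_matI)
    fix r c assume "r < dim_row (1\<^sub>m n :: real mat)" "c < dim_col (1\<^sub>m n :: real mat)"
    then have rc: "r < n" "c < n" by auto
    have ag: "a (g r) \<noteq> 0" using g_rng[OF rc(1)] anz by simp
    have e: "(Sinv*S)$$(r,c) = (\<Sum>m<n. Sinv$$(r,m) * S_mat n a $$(m,c))"
      using mult_entry[OF carr(2) carr(1) rc] unfolding S_def .
    show "(Sinv*S)$$(r,c) = 1\<^sub>m n $$ (r,c)"
    proof (cases "c + 1 < n")
      case True
      have ac: "a (c+2) \<noteq> 0" using anz True by simp
      have "(Sinv*S)$$(r,c) = Sinv$$(r,0) * (a 1 / a (c+2)) - Sinv$$(r,c+1)"
        unfolding e by (rule S_col_lt[OF True])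
      also have "\<dots> = (1 / (W * a (g r) * a 1)) * (a 1 / a (c+2))
           - (1 / (W * a (g r) * a (c+2)) - (if r + 1 < n \<and> c = r then 1 else 0))"
        using Sinv_entry[of r 0] Sinv_entry[of r "c+1"] rc True by simp
      also have "\<dots> = (if r + 1 < n \<and> c = r then 1 else 0)"
        using a1 ac ag Wpos by (simp add: field_simps)
      also have "\<dots> = 1\<^sub>m n $$ (r,c)" using rc True by auto
      finally show ?thesis .
    next
      case False
      then have cn: "c = n - 1" using rc by simp
      have "(Sinv*S)$$(r,c) = (\<Sum>m<n. Sinv$$(r,m) * (a n / a (m+1)))"
        using S_col_last[of a n "\<lambda>m. Sinv$$(r,m)", OF an] e cn by simp
      also have "\<dots> = (\<Sum>m<n. (a n / (W * a (g r))) * (1 / (a (m+1))^2)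
            - (if m = r + 1 then (if r + 1 < n then a n / a (r+2) else 0) else 0))"
      proof (rule sum.cong)
        fix m assume "m \<in> {..<n}"
        then have m: "m < n" by simp
        have am: "a (m+1) \<noteq> 0" using anz m by simp
        show "Sinv$$(r,m) * (a n / a (m+1)) = (a n / (W * a (g r))) * (1 / (a (m+1))^2)
            - (if m = r + 1 then (if r + 1 < n then a n / a (r+2) else 0) else 0)"
          unfolding Sinv_entry[OF rc(1) m] using am ag Wpos by (auto simp: field_simps power2_eq_square)
      qed simp
      also have "\<dots> = (a n / (W * a (g r))) * W - (if r + 1 < n then a n / a (r+2) else 0)"
      proof -
        have "(\<Sum>m<n. (a n / (W * a (g r))) * (1 / (a (m+1))^2))
            = (a n / (W * a (g r))) * (\<Sum>m<n. 1 / (a (m+1))^2)" by (rule sum_distrib_left[symmetric])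
        also have "\<dots> = (a n / (W * a (g r))) * W" by (simp only: W_shift)
        finally show ?thesis by (simp add: sum_subtractf)
      qed
      also have "\<dots> = 1\<^sub>m n $$ (r,c)"
      proof (cases "r + 1 < n")
        case True
        then have "g r = r + 2" by (simp add: g_def)
        then show ?thesis using True rc cn ag Wpos by (auto simp: field_simps)
      next
        case False
        then have "g r = n" "r = c" using rc cn by (auto simp: g_def)
        then show ?thesis using False rc cn Wpos an by (auto simp: field_simps)
      qed
      finally show ?thesis .
    qed
  qed (use carr in auto)
  have inv2: "S * Sinv = 1\<^sub>m n"
    by (rule mat_mult_left_right_inverse[OF carr(2) carr(1) inv1])
  have SD: "\<Sigma> * S = S * D"
  proof (rule eq_matI)
    fix r c assume "r < dim_row (S * D)" "c < dim_col (S * D)"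
    then have rc: "r < n" "c < n" using carr by auto
    have ar: "a (r+1) \<noteq> 0" using anz rc by simp
    have Sig: "\<Sigma> $$ (r,m) = c0 / (a (r+1) * a (m+1))" if "m < n" for m
      unfolding \<Sigma>_def Sigma_mat_def c0_def using rc that by simp
    have e: "(\<Sigma>*S)$$(r,c) = (\<Sum>m<n. \<Sigma>$$(r,m) * S_mat n a $$(m,c))"
      using mult_entry[OF carr(3) carr(1) rc] unfolding S_def .
    have e2: "(S*D)$$(r,c) = (\<Sum>m<n. S$$(r,m) * D$$(m,c))"
      using mult_entry[OF carr(1) carr(4) rc] .
    also have "\<dots> = (\<Sum>m<n. if m = c then S$$(r,c) * (if c = n - 1 then lam2 else lam1) else 0)"
      by (rule sum.cong) (auto simp: D_def D_mat_def rc)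
    also have "\<dots> = S$$(r,c) * (if c = n - 1 then lam2 else lam1)" using rc by simp
    finally have e2: "(S*D)$$(r,c) = S$$(r,c) * (if c = n - 1 then lam2 else lam1)" .
    show "(\<Sigma>*S)$$(r,c) = (S*D)$$(r,c)"
    proof (cases "c + 1 < n")
      case True
      have ac: "a (c+2) \<noteq> 0" using anz True by simp
      have "(\<Sigma>*S)$$(r,c) = \<Sigma>$$(r,0) * (a 1 / a (c+2)) - \<Sigma>$$(r,c+1)"
        unfolding e by (rule S_col_lt[OF True])
      also have "\<dots> = 0"
      proof -
        have s0: "\<Sigma>$$(r,0) = c0 / (a (r+1) * a 1)" using Sig[of 0] rc by simp
        have s1: "\<Sigma>$$(r,c+1) = c0 / (a (r+1) * a (c+2))" using Sig[of "c+1"] True by simp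
        show ?thesis unfolding s0 s1 using a1 ac ar by (simp add: field_simps)
      qed
      finally show ?thesis unfolding e2 lam1_def using True by simp
    next
      case False
      then have cn: "c = n - 1" using rc by simp
      have "(\<Sigma>*S)$$(r,c) = (\<Sum>m<n. \<Sigma>$$(r,m) * (a n / a (m+1)))"
        using S_col_last[of a n "\<lambda>m. \<Sigma>$$(r,m)", OF an] e cn by simp
      also have "\<dots> = (\<Sum>m<n. (c0 * a n / a (r+1)) * (1 / (a (m+1))^2))"
      proof (rule sum.cong)
        fix m assume "m \<in> {..<n}"
        then have m: "m < n" by simp
        have am: "a (m+1) \<noteq> 0" using anz m by simp
        show "\<Sigma>$$(r,m) * (a n / a (m+1)) = (c0 * a n / a (r+1)) * (1 / (a (m+1))^2)"
          using Sig[OF m] am ar by (simp add: field_simps power2_eq_square)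
      qed simp
      also have "\<dots> = (c0 * a n / a (r+1)) * (\<Sum>m<n. 1 / (a (m+1))^2)" by (rule sum_distrib_left[symmetric])
      also have "\<dots> = (c0 * a n / a (r+1)) * W" by (simp only: W_shift)
      also have "\<dots> = (S*D)$$(r,c)"
      proof -
        have "S$$(r,c) = a n / a (r+1)" unfolding S_def cn by (rule S_entry_last[of r n a, OF rc(1) an])
        then show ?thesis unfolding e2 using cn by (simp add: lam2_def c0_def W_def)
      qed
      finally show ?thesis .
    qed
  qed (use carr in auto)
  have Dform: "D = Sinv * \<Sigma> * S"
  proof -
    have "Sinv * \<Sigma> * S = Sinv * (\<Sigma> * S)" using carr by (simp add: assoc_mult_mat[of _ n n _ n _ n])
    also have "\<dots> = Sinv * (S * D)" by (simp add: SD)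
    also have "\<dots> = (Sinv * S) * D" using carr by (simp add: assoc_mult_mat[of _ n n _ n _ n])
    also have "\<dots> = D" using carr inv1 by simp
    finally show ?thesis by simp
  qed
  have Sig_form: "\<Sigma> = S * D * Sinv"
  proof -
    have "S * D * Sinv = \<Sigma> * S * Sinv" by (simp add: SD)
    also have "\<dots> = \<Sigma> * (S * Sinv)" using carr by (simp add: assoc_mult_mat[of _ n n _ n _ n])
    also have "\<dots> = \<Sigma>" using carr inv2 by simp
    finally show ?thesis by simp
  qed
  have dS: "dim_row S = n" "dim_row Sinv = n" "dim_row \<Sigma> = n" using carr by auto
  have "similar_mat_wit \<Sigma> D S Sinv"
    unfolding similar_mat_wit_def Let_def using carr inv1 inv2 Sig_form dS by auto
  then have "similar_mat \<Sigma> D" unfolding similar_mat_def by blast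
  moreover have "inverts_mat S Sinv" "inverts_mat Sinv S"
    unfolding inverts_mat_def using dS inv1 inv2 by auto
  moreover have "invertible_mat S"
    unfolding invertible_mat_def square_mat.simps using carr \<open>inverts_mat S Sinv\<close> \<open>inverts_mat Sinv S\<close> by auto
  ultimately show ?thesis using Dform by blast
qed

end
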